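(* Let $\xi=\xi_{\{\mu\}}$ be a GCKV on $\mathbb{E}^2$, not identically zero, with parameters $\mu=(\mu_0,\mu_1,\mu_2)$ in the coordinates $\{z,\bar z\}$. Let $U\subset\mathbb{R}^4\setminus\{0\}$ be the set of $u$ such that $\xi$ is a Killing vector of the metric $g_u$. Then: - If $2\mu_0\mu_2-\mu_1^2\notin\mathbb{R}$, then $U=\emptyset$. - If $2\mu_0\mu_2-\mu_1^2\in\mathbb{R}$, let $\gamma,\delta\in\mathbb{C}$ be any pair with $\frac12\delta^2\mu_2-\gamma\delta\mu_1+\gamma^2\mu_0=1$, set $\alpha=\frac12(\delta\mu_2-\gamma\mu_1)$, $\beta=\frac12\delta\mu_1-\gamma\mu_0$ and $\mathbb{A}=\begin{pmatrix}\alpha&\beta\\ \gamma&\delta\end{pmatrix}$. Then $u\in U$ if and only if $$(u_0,u_1,u_2,u_3)^T=\mathcal{O}(\mathbb{A})^T\Big(s_1\big(\tfrac14(2\mu_0\mu_2-\mu_1^2)+1\big),\ s_1\big(\tfrac14(2\mu_0\mu_2-\mu_1^2)-1\big),\ 0,\ s_2\Big)^T$$ for some $(s_1,s_2)\in\mathbb{R}^2\setminus\{0\}$. Moreover, such $g_u$ has constant Gauss curvature $s_1^2(2\mu_0\mu_2-\mu_1^2)-s_2^2$.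
   Context: $\mathbb{E}^2$ has Cartesian coordinates $\{x,y\}$, $z=\frac12(x-iy)$. A GCKV with parameters $\mu\in\mathbb{C}^3$ is $\xi_{\{\mu\}}=(\mu_0+\mu_1z+\frac12\mu_2z^2)\partial_z+(\bar\mu_0+\bar\mu_1\bar z+\frac12\bar\mu_2\bar z^2)\partial_{\bar z}$. For $u=(u_0,u_1,u_2,u_3)\in\mathbb{R}^4\setminus\{0\}$, $g_u:=\Omega_u^{-2}(dx^2+dy^2)$ with $\Omega_u=u_0+u_1+u_2x+u_3y+\frac14(u_0-u_1)(x^2+y^2)$ (on the set where $\Omega_u\ne0$). For $\mathbb{A}\in SL(2,\mathbb{C})$, $\mathcal{O}(\mathbb{A})=\frac12M$ where the rows of $M$ are: row 0: $\big(\alpha\bar\alpha+\beta\bar\beta+\gamma\bar\gamma+\delta\bar\delta,\ -\alpha\bar\alpha+\beta\bar\beta-\gamma\bar\gamma+\delta\bar\delta,\ \alpha\bar\beta+\beta\bar\alpha+\gamma\bar\delta+\delta\bar\gamma,\ i(-\alpha\bar\beta+\beta\bar\alpha-\gamma\bar\delta+\delta\bar\gamma)\big)$; row 1: $\big(-\alpha\bar\alpha-\beta\bar\beta+\gamma\bar\gamma+\delta\bar\delta,\ \alpha\bar\alpha-\beta\bar\beta-\gamma\bar\gamma+\delta\bar\delta,\ -\alpha\bar\beta-\beta\bar\alpha+\gamma\bar\delta+\delta\bar\gamma,\ i(\alpha\bar\beta-\beta\bar\alpha-\gamma\bar\delta+\delta\bar\gamma)\big)$; row 2: $\big(\alpha\bar\gamma+\beta\bar\delta+\gamma\bar\alpha+\delta\bar\beta,\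 -\alpha\bar\gamma+\beta\bar\delta-\gamma\bar\alpha+\delta\bar\beta,\ \alpha\bar\delta+\beta\bar\gamma+\gamma\bar\beta+\delta\bar\alpha,\ i(-\alpha\bar\delta+\beta\bar\gamma-\gamma\bar\beta+\delta\bar\alpha)\big)$; row 3: $\big(i(\alpha\bar\gamma+\beta\bar\delta-\gamma\bar\alpha-\delta\bar\beta),\ i(-\alpha\bar\gamma+\beta\bar\delta+\gamma\bar\alpha-\delta\bar\beta),\ i(\alpha\bar\delta+\beta\bar\gamma-\gamma\bar\beta-\delta\bar\alpha),\ \alpha\bar\delta-\beta\bar\gamma-\gamma\bar\beta+\delta\bar\alpha\big)$. *)

theory Defs
  imports "HOL-Analysis.Analysis"
begin

definition pd :: "nat \<Rightarrow> (real \<times> real \<Rightarrow> real) \<Rightarrow> real \<times> real \<Rightarrow> real" where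
  "pd k f p = (if k = 0 then deriv (\<lambda>t. f (t, snd p)) (fst p)
                         else deriv (\<lambda>t. f (fst p, t)) (snd p))"

definition zc :: "real \<times> real \<Rightarrow> complex" where
  "zc p = (complex_of_real (fst p) - \<i> * complex_of_real (snd p)) / 2"

text \<open>Coefficient of d/dz in xi_mu.\<close>
definition gckv_coeff :: "complex \<Rightarrow> complex \<Rightarrow> complex \<Rightarrow> real \<times> real \<Rightarrow> complex" where
  "gckv_coeff m0 m1 m2 p = m0 + m1 * zc p + m2 * (zc p)^2 / 2"

text \<open>Real components of xi = a d/dz + conj(a) d/dzbar. Since x = z + zbar and
  y = i (z - zbar), one has d/dz = d/dx + i d/dy and d/dzbar = d/dx - i d/dy, so the
  x-component is a + conj a and the y-component is i (a - conj a).\<close>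
definition gckv :: "complex \<Rightarrow> complex \<Rightarrow> complex \<Rightarrow> nat \<Rightarrow> real \<times> real \<Rightarrow> real" where
  "gckv m0 m1 m2 k p =
     (let a = gckv_coeff m0 m1 m2 p in
      if k = 0 then Re (a + cnj a) else Re (\<i> * (a - cnj a)))"

definition lie_metric ::
  "(nat \<Rightarrow> real \<times> real \<Rightarrow> real) \<Rightarrow> (nat \<Rightarrow> nat \<Rightarrow> real \<times> real \<Rightarrow> real)
    \<Rightarrow> nat \<Rightarrow> nat \<Rightarrow> real \<times> real \<Rightarrow> real" where
  "lie_metric v g i j p =
     (\<Sum>k<2. v k p * pd k (g i j) p + g k j p * pd i (v k) p + g i k p * pd j (v k) p)"

definition killing_on ::
  "(nat \<Rightarrow> real \<times> real \<Rightarrow> real) \<Rightarrow> (nat \<Rightarrow> nat \<Rightarrow> real \<times> real \<Rightarrow> real) \<Rightarrow> (real \<times> real) set \<Rightarrow> bool" where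
  "killing_on v g D \<longleftrightarrow> (\<forall>p\<in>D. \<forall>i<2. \<forall>j<2. lie_metric v g i j p = 0)"

definition det3 :: "real \<Rightarrow> real \<Rightarrow> real \<Rightarrow> real \<Rightarrow> real \<Rightarrow> real \<Rightarrow> real \<Rightarrow> real \<Rightarrow> real \<Rightarrow> real" where
  "det3 a b c d e f g h i = a*(e*i - f*h) - b*(d*i - f*g) + c*(d*h - e*g)"

text \<open>Gauss curvature via the Brioschi formula, with E = g00, F = g01, G = g11,
  u = x, v = y.\<close>
definition gauss_curvature :: "(nat \<Rightarrow> nat \<Rightarrow> real \<times> real \<Rightarrow> real) \<Rightarrow> real \<times> real \<Rightarrow> real" where
  "gauss_curvature g p =
    (let E = g 0 0; F = g 0 1; G = g 1 1;
         Ep = E p; Fp = F p; Gp = G p;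
         Eu = pd 0 E p; Ev = pd 1 E p; Fu = pd 0 F p; Fv = pd 1 F p;
         Gu = pd 0 G p; Gv = pd 1 G p;
         Evv = pd 1 (pd 1 E) p; Fuv = pd 1 (pd 0 F) p; Guu = pd 0 (pd 0 G) p
     in (det3 (- Evv / 2 + Fuv - Guu / 2) (Eu / 2) (Fu - Ev / 2)
              (Fv - Gu / 2) Ep Fp
              (Gv / 2) Fp Gp
         - det3 0 (Ev / 2) (Gu / 2)
              (Ev / 2) Ep Fp
              (Gu / 2) Fp Gp) / (Ep * Gp - Fp^2)^2)"

definition Omega :: "real \<times> real \<times> real \<times> real \<Rightarrow> real \<times> real \<Rightarrow> real" where
  "Omega u p = (case u of (u0, u1, u2, u3) \<Rightarrow>
     u0 + u1 + u2 * fst p + u3 * snd p + (u0 - u1) * ((fst p)^2 + (snd p)^2) / 4)"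

definition gmet :: "real \<times> real \<times> real \<times> real \<Rightarrow> nat \<Rightarrow> nat \<Rightarrow> real \<times> real \<Rightarrow> real" where
  "gmet u i j p = (if i = j then 1 / (Omega u p)^2 else 0)"

definition dom_u :: "real \<times> real \<times> real \<times> real \<Rightarrow> (real \<times> real) set" where
  "dom_u u = {p. Omega u p \<noteq> 0}"

definition killing_set :: "complex \<Rightarrow> complex \<Rightarrow> complex \<Rightarrow> (real \<times> real \<times> real \<times> real) set" where
  "killing_set m0 m1 m2 =
     {u. u \<noteq> (0, 0, 0, 0) \<and> killing_on (gckv m0 m1 m2) (gmet u) (dom_u u)}"

definition Omat :: "complex \<Rightarrow> complex \<Rightarrow> complex \<Rightarrow> complex \<Rightarrow> nat \<Rightarrow> nat \<Rightarrow> complex" where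
  "Omat a b c d r k = (1/2) * (
    if r = 0 then
      (if k = 0 then a*cnj a + b*cnj b + c*cnj c + d*cnj d
       else if k = 1 then - a*cnj a + b*cnj b - c*cnj c + d*cnj d
       else if k = 2 then a*cnj b + b*cnj a + c*cnj d + d*cnj c
       else \<i> * (- a*cnj b + b*cnj a - c*cnj d + d*cnj c))
    else if r = 1 then
      (if k = 0 then - a*cnj a - b*cnj b + c*cnj c + d*cnj d
       else if k = 1 then a*cnj a - b*cnj b - c*cnj c + d*cnj d
       else if k = 2 then - a*cnj b - b*cnj a + c*cnj d + d*cnj c
       else \<i> * (a*cnj b - b*cnj a - c*cnj d + d*cnj c))
    else if r = 2 then
      (if k = 0 then a*cnj c + b*cnj d + c*cnj a + d*cnj b
       else if k = 1 then - a*cnj c + b*cnj d - c*cnj a + d*cnj b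
       else if k = 2 then a*cnj d + b*cnj c + c*cnj b + d*cnj a
       else \<i> * (- a*cnj d + b*cnj c - c*cnj b + d*cnj a))
    else
      (if k = 0 then \<i> * (a*cnj c + b*cnj d - c*cnj a - d*cnj b)
       else if k = 1 then \<i> * (- a*cnj c + b*cnj d + c*cnj a - d*cnj b)
       else if k = 2 then \<i> * (a*cnj d + b*cnj c - c*cnj b - d*cnj a)
       else a*cnj d - b*cnj c - c*cnj b + d*cnj a))"

definition tup :: "real \<times> real \<times> real \<times> real \<Rightarrow> nat \<Rightarrow> real" where
  "tup u j = (case u of (u0, u1, u2, u3) \<Rightarrow>
     if j = 0 then u0 else if j = 1 then u1 else if j = 2 then u2 else u3)"

text \<open>u = O(A)^T w, i.e. u_k = sum_r O(A)_{r k} w_r.\<close>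
definition eq_OT :: "complex \<Rightarrow> complex \<Rightarrow> complex \<Rightarrow> complex \<Rightarrow>
     real \<times> real \<times> real \<times> real \<Rightarrow> real \<times> real \<times> real \<times> real \<Rightarrow> bool" where
  "eq_OT a b c d u w \<longleftrightarrow>
     (\<forall>k<4. complex_of_real (tup u k) = (\<Sum>r<4. Omat a b c d r k * complex_of_real (tup w r)))"

end

theory Submission
  imports Defs
begin


lemma gckv0: "gckv m0 m1 m2 0 (x,y) = 2*Re m0 + Re m1*x + Im m1*y + Re m2*(x^2-y^2)/4 + Im m2*x*y/2"
  by (simp add: gckv_def gckv_coeff_def zc_def Let_def power2_eq_square field_simps)

lemma gckv1: "k \<noteq> 0 \<Longrightarrow> gckv m0 m1 m2 k (x,y) = -2*Im m0 + Re m1*y - Im m1*x + Re m2*x*y/2 - Im m2*(x^2-y^2)/4"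
  by (simp add: gckv_def gckv_coeff_def zc_def Let_def power2_eq_square field_simps)

lemma pd0: "((\<lambda>t. f (t, y)) has_real_derivative D) (at x) \<Longrightarrow> pd 0 f (x, y) = D"
  by (simp add: pd_def DERIV_imp_deriv)
lemma pd1: "k \<noteq> 0 \<Longrightarrow> ((\<lambda>t. f (x, t)) has_real_derivative D) (at y) \<Longrightarrow> pd k f (x, y) = D"
  by (simp add: pd_def DERIV_imp_deriv)



abbreviation "V0 m0 m1 m2 x y \<equiv> 2*Re m0 + Re m1*x + Im m1*y + Re m2*(x^2-y^2)/4 + Im m2*x*y/2"
abbreviation "V1 m0 m1 m2 x y \<equiv> -2*Im m0 + Re m1*y - Im m1*x + Re m2*x*y/2 - Im m2*(x^2-y^2)/4"
abbreviation "DV m1 m2 x y \<equiv> Re m1 + Re m2*x/2 + Im m2*y/2"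
abbreviation "DW m1 m2 x y \<equiv> Im m1 - Re m2*y/2 + Im m2*x/2"

lemma pdv00: "pd 0 (gckv m0 m1 m2 0) (x,y) = DV m1 m2 x y"
  apply (rule pd0) unfolding gckv0
  apply (rule derivative_eq_intros refl | simp)+
  apply (simp add: field_simps)
  done
lemma pdv01: "k \<noteq> 0 \<Longrightarrow> pd k (gckv m0 m1 m2 0) (x,y) = DW m1 m2 x y"
  apply (rule pd1, assumption) unfolding gckv0
  apply (rule derivative_eq_intros refl | simp)+
  apply (simp add: field_simps)
  done
lemma pdv10: "j \<noteq> 0 \<Longrightarrow> pd 0 (gckv m0 m1 m2 j) (x,y) = - DW m1 m2 x y"
  apply (rule pd0) apply (subst gckv1, assumption)
  apply (rule derivative_eq_intros refl | simp)+
  apply (simp add: field_simps)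
  done
lemma pdv11: "j \<noteq> 0 \<Longrightarrow> k \<noteq> 0 \<Longrightarrow> pd k (gckv m0 m1 m2 j) (x,y) = DV m1 m2 x y"
  apply (rule pd1, assumption) apply (subst gckv1, assumption)
  apply (rule derivative_eq_intros refl | simp)+
  apply (simp add: field_simps)
  done

lemma Omega_eq: "Omega (u0,u1,u2,u3) (x,y) = u0+u1+u2*x+u3*y+(u0-u1)*(x^2+y^2)/4"
  by (simp add: Omega_def)

lemma gmet_off: "i \<noteq> j \<Longrightarrow> gmet u i j = (\<lambda>p. 0)"
  by (auto simp: gmet_def)
lemma pd_const0: "pd k (\<lambda>p. 0) p = 0"
  by (simp add: pd_def)

lemma inv_sq_deriv: assumes "(f has_real_derivative f') (at x)" "f x \<noteq> 0"
  shows "((\<lambda>t. 1 / (f t)^2) has_real_derivative (-2*f'/(f x)^3)) (at x)"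
proof -
  have "((\<lambda>t. 1 / (f t)^2) has_real_derivative (- (2 * f x * f') / ((f x)^2)^2)) (at x)"
    using assms by (auto intro!: derivative_eq_intros)
  then show ?thesis using assms(2) by (simp add: power2_eq_square power3_eq_cube field_simps)
qed

lemma d_O0: "((\<lambda>t. Omega (u0,u1,u2,u3) (t,y)) has_real_derivative (u2 + (u0-u1)*x/2)) (at x)"
  unfolding Omega_eq by (auto intro!: derivative_eq_intros simp: field_simps)
lemma d_O1: "((\<lambda>t. Omega (u0,u1,u2,u3) (x,t)) has_real_derivative (u3 + (u0-u1)*y/2)) (at y)"
  unfolding Omega_eq by (auto intro!: derivative_eq_intros simp: field_simps)

lemma gmet_diag: "gmet u i i = (\<lambda>p. 1/(Omega u p)^2)"
  by (rule ext) (simp add: gmet_def)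

lemma pd_g0: assumes "Omega (u0,u1,u2,u3) (x,y) \<noteq> 0"
  shows "pd 0 (gmet (u0,u1,u2,u3) i i) (x,y) = -2*(u2 + (u0-u1)*x/2) / (Omega (u0,u1,u2,u3) (x,y))^3"
proof -
  have "pd 0 (\<lambda>p. 1/(Omega (u0,u1,u2,u3) p)^2) (x,y) = -2*(u2 + (u0-u1)*x/2) / (Omega (u0,u1,u2,u3) (x,y))^3"
    by (rule pd0, rule inv_sq_deriv[OF d_O0], rule assms)
  then show ?thesis by (simp only: gmet_diag)
qed
lemma pd_g1: assumes "k \<noteq> 0" "Omega (u0,u1,u2,u3) (x,y) \<noteq> 0"
  shows "pd k (gmet (u0,u1,u2,u3) i i) (x,y) = -2*(u3 + (u0-u1)*y/2) / (Omega (u0,u1,u2,u3) (x,y))^3"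
proof -
  have "pd k (\<lambda>p. 1/(Omega (u0,u1,u2,u3) p)^2) (x,y) = -2*(u3 + (u0-u1)*y/2) / (Omega (u0,u1,u2,u3) (x,y))^3"
    by (rule pd1, rule assms, rule inv_sq_deriv[OF d_O1], rule assms)
  then show ?thesis by (simp only: gmet_diag)
qed



definition Rf :: "complex \<Rightarrow> complex \<Rightarrow> complex \<Rightarrow> real \<Rightarrow> real \<Rightarrow> real \<Rightarrow> real \<Rightarrow> real \<Rightarrow> real \<Rightarrow> real" where
  "Rf m0 m1 m2 u0 u1 u2 u3 x y = V0 m0 m1 m2 x y * (u2 + (u0-u1)*x/2) + V1 m0 m1 m2 x y * (u3 + (u0-u1)*y/2)
     - Omega (u0,u1,u2,u3) (x,y) * DV m1 m2 x y"

lemma lie00: assumes "Omega (u0,u1,u2,u3) (x,y) \<noteq> 0"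
  shows "lie_metric (gckv m0 m1 m2) (gmet (u0,u1,u2,u3)) 0 0 (x,y) = -2 * Rf m0 m1 m2 u0 u1 u2 u3 x y / (Omega (u0,u1,u2,u3) (x,y))^3"
  using assms
  apply (simp add: lie_metric_def numeral_2_eq_2 pd_g0 pd_g1 pdv00 pdv01 pdv10 pdv11 gckv0 gckv1 gmet_off pd_const0)
  apply (simp add: gmet_def Rf_def field_simps power2_eq_square power3_eq_cube)
  done

lemma lie11: assumes "Omega (u0,u1,u2,u3) (x,y) \<noteq> 0"
  shows "lie_metric (gckv m0 m1 m2) (gmet (u0,u1,u2,u3)) (Suc 0) (Suc 0) (x,y) = -2 * Rf m0 m1 m2 u0 u1 u2 u3 x y / (Omega (u0,u1,u2,u3) (x,y))^3"
  using assms
  apply (simp add: lie_metric_def numeral_2_eq_2 pd_g0 pd_g1 pdv00 pdv01 pdv10 pdv11 gckv0 gckv1 gmet_off pd_const0)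
  apply (simp add: gmet_def Rf_def field_simps power2_eq_square power3_eq_cube)
  done

lemma lie01: assumes "Omega (u0,u1,u2,u3) (x,y) \<noteq> 0"
  shows "lie_metric (gckv m0 m1 m2) (gmet (u0,u1,u2,u3)) 0 (Suc 0) (x,y) = 0"
    "lie_metric (gckv m0 m1 m2) (gmet (u0,u1,u2,u3)) (Suc 0) 0 (x,y) = 0"
  using assms
  by (simp_all add: lie_metric_def numeral_2_eq_2 pd_g0 pd_g1 pdv00 pdv01 pdv10 pdv11 gckv0 gckv1 gmet_off pd_const0 gmet_def)
    (simp_all add: field_simps)

lemma killing_iff_R:
  "killing_on (gckv m0 m1 m2) (gmet (u0,u1,u2,u3)) (dom_u (u0,u1,u2,u3)) \<longleftrightarrow>
   (\<forall>x y. Omega (u0,u1,u2,u3) (x,y) \<noteq> 0 \<longrightarrow> Rf m0 m1 m2 u0 u1 u2 u3 x y = 0)"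
proof -
  have lt2: "(\<forall>i<2. P (i::nat)) \<longleftrightarrow> P 0 \<and> P (Suc 0)" for P
    by (auto simp: numeral_2_eq_2 less_Suc_eq)
  show ?thesis
    unfolding killing_on_def dom_u_def lt2
    by (auto simp: lie00 lie11 lie01)
qed



definition "kk0 m0 m1 m2 u0 u1 u2 u3 = 2*(u2*Re m0 - u3*Im m0) - (u0+u1)*Re m1"
definition "kk1 m0 m1 m2 u0 u1 u2 u3 = -2*u3*Im m1 - (u0+u1)*Re m2 + 2*(u0-u1)*Re m0"
definition "kk2 m0 m1 m2 u0 u1 u2 u3 = 2*u2*Im m1 - (u0+u1)*Im m2 - 2*(u0-u1)*Im m0"
definition "kk3 m0 m1 m2 u0 u1 u2 u3 = (u0-u1)*Re m1 - (u2*Re m2 + u3*Im m2)"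

lemma Rf_poly: "Rf m0 m1 m2 u0 u1 u2 u3 x y = kk0 m0 m1 m2 u0 u1 u2 u3 + kk1 m0 m1 m2 u0 u1 u2 u3 * x / 2
   + kk2 m0 m1 m2 u0 u1 u2 u3 * y / 2 + kk3 m0 m1 m2 u0 u1 u2 u3 * (x^2+y^2) / 4"
  unfolding Rf_def kk0_def kk1_def kk2_def kk3_def Omega_eq
  by (simp add: field_simps power2_eq_square)

lemma Rf_zero_iff: "(\<forall>x y. Rf m0 m1 m2 u0 u1 u2 u3 x y = 0) \<longleftrightarrow>
  (kk0 m0 m1 m2 u0 u1 u2 u3 = 0 \<and> kk1 m0 m1 m2 u0 u1 u2 u3 = 0 \<and> kk2 m0 m1 m2 u0 u1 u2 u3 = 0 \<and> kk3 m0 m1 m2 u0 u1 u2 u3 = 0)"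
proof
  assume H: "\<forall>x y. Rf m0 m1 m2 u0 u1 u2 u3 x y = 0"
  have h: "\<And>x y. kk0 m0 m1 m2 u0 u1 u2 u3 + kk1 m0 m1 m2 u0 u1 u2 u3 * x / 2
   + kk2 m0 m1 m2 u0 u1 u2 u3 * y / 2 + kk3 m0 m1 m2 u0 u1 u2 u3 * (x^2+y^2) / 4 = 0"
    using H by (simp add: Rf_poly)
  from h[of 0 0] h[of 1 0] h[of "-1" 0] h[of 0 1] show "kk0 m0 m1 m2 u0 u1 u2 u3 = 0 \<and> kk1 m0 m1 m2 u0 u1 u2 u3 = 0 \<and> kk2 m0 m1 m2 u0 u1 u2 u3 = 0 \<and> kk3 m0 m1 m2 u0 u1 u2 u3 = 0"
    by simp
next
  assume "kk0 m0 m1 m2 u0 u1 u2 u3 = 0 \<and> kk1 m0 m1 m2 u0 u1 u2 u3 = 0 \<and> kk2 m0 m1 m2 u0 u1 u2 u3 = 0 \<and> kk3 m0 m1 m2 u0 u1 u2 u3 = 0"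
  then show "\<forall>x y. Rf m0 m1 m2 u0 u1 u2 u3 x y = 0" by (simp add: Rf_poly)
qed

lemma tplus: "((\<lambda>t. x + t) \<longlongrightarrow> (x::real)) (at_right 0)"
  using tendsto_add[OF tendsto_const tendsto_ident_at, of x 0 "{0<..}"] by simp

lemma limit_zero:
  fixes f :: "real \<Rightarrow> real"
  assumes "(f \<longlongrightarrow> L) (at_right 0)" "eventually (\<lambda>t. f t = 0) (at_right 0)"
  shows "L = 0"
proof -
  have "((\<lambda>t. 0) \<longlongrightarrow> L) (at_right (0::real))"
    using Lim_transform_eventually[OF assms(1)] assms(2) by (simp add: eventually_mono)
  then show ?thesis by (simp add: tendsto_const_iff)
qed

lemma dens:
  fixes R :: "real \<Rightarrow> real \<Rightarrow> real"
  assumes nz: "(u0,u1,u2,u3) \<noteq> (0,0,0,0)"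
    and H: "\<forall>x y. Omega (u0,u1,u2,u3) (x,y) \<noteq> 0 \<longrightarrow> R x y = 0"
    and cx: "\<And>x y. ((\<lambda>t. R (x+t) y) \<longlongrightarrow> R x y) (at_right 0)"
    and cy: "\<And>x y. ((\<lambda>t. R x (y+t)) \<longlongrightarrow> R x y) (at_right 0)"
  shows "R x y = 0"
proof (cases "Omega (u0,u1,u2,u3) (x,y) = 0")
  case False then show ?thesis using H by auto
next
  case Z: True
  define C where "C = u0 - u1"
  define Ox where "Ox = u2 + C*x/2"
  define Oy where "Oy = u3 + C*y/2"
  have ex: "Omega (u0,u1,u2,u3) (x+t,y) = t*(Ox + C*t/4)" for t
    using Z unfolding Omega_eq Ox_def C_def by (simp add: field_simps power2_eq_square)
  have ey: "Omega (u0,u1,u2,u3) (x,y+t) = t*(Oy + C*t/4)" for t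
    using Z unfolding Omega_eq Oy_def C_def by (simp add: field_simps power2_eq_square)
  show ?thesis
  proof (cases "Ox \<noteq> 0 \<or> C \<noteq> 0")
    case True
    define b where "b = (if C \<noteq> 0 \<and> -4*Ox/C > 0 then -4*Ox/C else 1)"
    have bpos: "b > 0" unfolding b_def by auto
    have "\<forall>t>0. t < b \<longrightarrow> R (x+t) y = 0"
    proof (intro allI impI)
      fix t :: real assume t: "t > 0" "t < b"
      have "Ox + C*t/4 \<noteq> 0"
      proof
        assume E: "Ox + C*t/4 = 0"
        show False
        proof (cases "C = 0")
          case True then show False using E \<open>Ox \<noteq> 0 \<or> C \<noteq> 0\<close> by simp
        next
          case False
          then have "t = -4*Ox/C" using E by (simp add: field_simps)
          then show False using t False unfolding b_def by (auto split: if_splits)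
        qed
      qed
      then have "Omega (u0,u1,u2,u3) (x+t,y) \<noteq> 0" using ex t by simp
      then show "R (x+t) y = 0" using H by auto
    qed
    then have "eventually (\<lambda>t. R (x+t) y = 0) (at_right 0)"
      unfolding eventually_at_right_field using bpos by auto
    then show ?thesis using limit_zero[OF cx] by blast
  next
    case False
    then have O0: "Ox = 0" "C = 0" by auto
    have "Oy \<noteq> 0"
    proof
      assume "Oy = 0"
      then have "u2 = 0" "u3 = 0" "u0 = u1" using O0 unfolding Ox_def Oy_def C_def by auto
      then show False using Z nz by (simp add: Omega_eq)
    qed
    then have "\<forall>t>0. R x (y+t) = 0" using H ey O0 by auto
    then have "eventually (\<lambda>t. R x (y+t) = 0) (at_right 0)"
      unfolding eventually_at_right_field by (auto intro: exI[of _ 1])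
    then show ?thesis using limit_zero[OF cy] by blast
  qed
qed

lemma killing_iff_kk:
  assumes "(u0,u1,u2,u3) \<noteq> (0,0,0,0)"
  shows "killing_on (gckv m0 m1 m2) (gmet (u0,u1,u2,u3)) (dom_u (u0,u1,u2,u3)) \<longleftrightarrow>
  (kk0 m0 m1 m2 u0 u1 u2 u3 = 0 \<and> kk1 m0 m1 m2 u0 u1 u2 u3 = 0 \<and> kk2 m0 m1 m2 u0 u1 u2 u3 = 0 \<and> kk3 m0 m1 m2 u0 u1 u2 u3 = 0)"
  unfolding killing_iff_R Rf_zero_iff[symmetric]
proof (rule iffI)
  assume H: "\<forall>x y. Omega (u0, u1, u2, u3) (x, y) \<noteq> 0 \<longrightarrow> Rf m0 m1 m2 u0 u1 u2 u3 x y = 0"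
  show "\<forall>x y. Rf m0 m1 m2 u0 u1 u2 u3 x y = 0"
    by (intro allI, rule dens[OF assms H]; unfold Rf_poly; (intro tendsto_intros tplus; simp)?)
next
  assume "\<forall>x y. Rf m0 m1 m2 u0 u1 u2 u3 x y = 0"
  then show "\<forall>x y. Omega (u0, u1, u2, u3) (x, y) \<noteq> 0 \<longrightarrow> Rf m0 m1 m2 u0 u1 u2 u3 x y = 0" by simp
qed



lemma brio_num:
  fixes r Ox Oy C :: real
  shows "det3 (- (-C*r^3 + 6*Oy^2*r^4) / 2 + 0 - (-C*r^3 + 6*Ox^2*r^4) / 2) ((-2*Ox*r^3) / 2) (0 - (-2*Oy*r^3) / 2)
              (0 - (-2*Ox*r^3) / 2) (r^2) 0
              ((-2*Oy*r^3) / 2) 0 (r^2)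
         - det3 0 ((-2*Oy*r^3) / 2) ((-2*Ox*r^3) / 2)
              ((-2*Oy*r^3) / 2) (r^2) 0
              ((-2*Ox*r^3) / 2) 0 (r^2) = C*r^7 - (Ox^2+Oy^2)*r^8"
  unfolding det3_def by (simp add: field_simps eval_nat_numeral)

lemma brio:
  fixes r Ox Oy C :: real
  assumes "r \<noteq> 0"
  shows "(det3 (- (-C*r^3 + 6*Oy^2*r^4) / 2 + 0 - (-C*r^3 + 6*Ox^2*r^4) / 2) ((-2*Ox*r^3) / 2) (0 - (-2*Oy*r^3) / 2)
              (0 - (-2*Ox*r^3) / 2) (r^2) 0
              ((-2*Oy*r^3) / 2) 0 (r^2)
         - det3 0 ((-2*Oy*r^3) / 2) ((-2*Ox*r^3) / 2)
              ((-2*Oy*r^3) / 2) (r^2) 0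
              ((-2*Ox*r^3) / 2) 0 (r^2)) / ((r^2) * (r^2) - 0^2)^2 = C/r - Ox^2 - Oy^2"
  unfolding brio_num using assms
  by (simp add: field_simps eval_nat_numeral)



lemma open_dom_t: "open {t. Omega (u0,u1,u2,u3) (x,t) \<noteq> 0}"
  unfolding Omega_eq by (rule open_Collect_neq) (auto intro!: continuous_intros)
lemma open_dom_s: "open {t. Omega (u0,u1,u2,u3) (t,y) \<noteq> 0}"
  unfolding Omega_eq by (rule open_Collect_neq) (auto intro!: continuous_intros)

lemma d_quot3:
  assumes "(f has_real_derivative f') (at x)" "(g has_real_derivative g') (at x)" "g x \<noteq> 0"
  shows "((\<lambda>t. f t / (g t)^3) has_real_derivative (f'/(g x)^3 - 3*f x*g'/(g x)^4)) (at x)"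
proof -
  have "((\<lambda>t. f t / (g t)^3) has_real_derivative ((f' * (g x)^3 - f x * (of_nat 3 * (g x)^(3-1) * g')) / ((g x)^3 * (g x)^3))) (at x)"
    using assms by (auto intro!: derivative_eq_intros)
  then show ?thesis
    by (rule DERIV_cong) (use assms(3) in \<open>simp add: field_simps eval_nat_numeral\<close>)
qed

lemma d_lin: "((\<lambda>t. -2*(u + c*t/2)) has_real_derivative (-c)) (at (y::real))"
  by (auto intro!: derivative_eq_intros)

lemma d2_1: assumes "Omega (u0,u1,u2,u3) (x,y) \<noteq> 0"
  shows "pd 1 (pd 1 (gmet (u0,u1,u2,u3) i i)) (x,y) =
     -(u0-u1)/(Omega (u0,u1,u2,u3) (x,y))^3 + 6*(u3 + (u0-u1)*y/2)^2/(Omega (u0,u1,u2,u3) (x,y))^4"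
proof (rule pd1)
  show "(1::nat) \<noteq> 0" by simp
  let ?f = "\<lambda>t. -2*(u3 + (u0-u1)*t/2) / (Omega (u0,u1,u2,u3) (x,t))^3"
  have D0: "(?f has_real_derivative (-(u0-u1)/(Omega (u0,u1,u2,u3) (x,y))^3 - 3*(-2*(u3 + (u0-u1)*y/2))*(u3 + (u0-u1)*y/2)/(Omega (u0,u1,u2,u3) (x,y))^4)) (at y)"
    by (rule d_quot3[OF d_lin d_O1 assms])
  have D: "(?f has_real_derivative (-(u0-u1)/(Omega (u0,u1,u2,u3) (x,y))^3 + 6*(u3 + (u0-u1)*y/2)^2/(Omega (u0,u1,u2,u3) (x,y))^4)) (at y)"
    by (rule DERIV_cong[OF D0]) (use assms in \<open>simp add: field_simps power2_eq_square\<close>)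
  show "((\<lambda>t. pd 1 (gmet (u0,u1,u2,u3) i i) (x, t)) has_real_derivative (-(u0-u1)/(Omega (u0,u1,u2,u3) (x,y))^3 + 6*(u3 + (u0-u1)*y/2)^2/(Omega (u0,u1,u2,u3) (x,y))^4)) (at y)"
    apply (rule has_field_derivative_transform_within_open[OF D open_dom_t])
    using assms apply simp
    apply (simp add: pd_g1)
    done
qed

lemma d2_0: assumes "Omega (u0,u1,u2,u3) (x,y) \<noteq> 0"
  shows "pd 0 (pd 0 (gmet (u0,u1,u2,u3) i i)) (x,y) =
     -(u0-u1)/(Omega (u0,u1,u2,u3) (x,y))^3 + 6*(u2 + (u0-u1)*x/2)^2/(Omega (u0,u1,u2,u3) (x,y))^4"
proof (rule pd0)
  let ?f = "\<lambda>t. -2*(u2 + (u0-u1)*t/2) / (Omega (u0,u1,u2,u3) (t,y))^3"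
  have D0: "(?f has_real_derivative (-(u0-u1)/(Omega (u0,u1,u2,u3) (x,y))^3 - 3*(-2*(u2 + (u0-u1)*x/2))*(u2 + (u0-u1)*x/2)/(Omega (u0,u1,u2,u3) (x,y))^4)) (at x)"
    by (rule d_quot3[OF d_lin d_O0 assms])
  have D: "(?f has_real_derivative (-(u0-u1)/(Omega (u0,u1,u2,u3) (x,y))^3 + 6*(u2 + (u0-u1)*x/2)^2/(Omega (u0,u1,u2,u3) (x,y))^4)) (at x)"
    by (rule DERIV_cong[OF D0]) (use assms in \<open>simp add: field_simps power2_eq_square\<close>)
  show "((\<lambda>t. pd 0 (gmet (u0,u1,u2,u3) i i) (t, y)) has_real_derivative (-(u0-u1)/(Omega (u0,u1,u2,u3) (x,y))^3 + 6*(u2 + (u0-u1)*x/2)^2/(Omega (u0,u1,u2,u3) (x,y))^4)) (at x)"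
    apply (rule has_field_derivative_transform_within_open[OF D open_dom_s])
    using assms apply simp
    apply (simp add: pd_g0)
    done
qed



lemma gauss_val:
  assumes "Omega (u0,u1,u2,u3) (x,y) \<noteq> 0"
  shows "gauss_curvature (gmet (u0,u1,u2,u3)) (x,y) = u0^2 - u1^2 - u2^2 - u3^2"
proof -
  define Q where "Q = Omega (u0,u1,u2,u3) (x,y)"
  define r where "r = 1/Q"
  define Ox where "Ox = u2 + (u0-u1)*x/2"
  define Oy where "Oy = u3 + (u0-u1)*y/2"
  define C where "C = u0 - u1"
  have Q0: "Q \<noteq> 0" using assms Q_def by simp
  have r0: "r \<noteq> 0" using Q0 r_def by simp
  have v1: "gmet (u0,u1,u2,u3) i i (x,y) = r^2" for i
    by (simp add: gmet_def r_def Q_def power_one_over)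
  have v2: "gmet (u0,u1,u2,u3) 0 1 = (\<lambda>p. 0)" by (rule gmet_off) simp
  have v3: "pd 0 (gmet (u0,u1,u2,u3) i i) (x,y) = -2*Ox*r^3" for i
    using pd_g0[OF assms, of i] unfolding Ox_def r_def Q_def by (simp add: power_one_over)
  have v4: "pd 1 (gmet (u0,u1,u2,u3) i i) (x,y) = -2*Oy*r^3" for i
    using pd_g1[OF _ assms, of 1 i] unfolding Oy_def r_def Q_def by (simp add: power_one_over)
  have v5: "pd 1 (pd 1 (gmet (u0,u1,u2,u3) i i)) (x,y) = -C*r^3 + 6*Oy^2*r^4" for i
    using d2_1[OF assms, of i] unfolding Oy_def r_def Q_def C_def by (simp add: power_one_over)
  have v6: "pd 0 (pd 0 (gmet (u0,u1,u2,u3) i i)) (x,y) = -C*r^3 + 6*Ox^2*r^4" for i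
    using d2_0[OF assms, of i] unfolding Ox_def r_def Q_def C_def by (simp add: power_one_over)
  have v7: "pd k (\<lambda>p. 0) = (\<lambda>p. 0)" for k by (rule ext) (simp add: pd_const0)
  have "gauss_curvature (gmet (u0,u1,u2,u3)) (x,y) = C/r - Ox^2 - Oy^2"
    unfolding gauss_curvature_def Let_def v1 v2 v3 v4 v5 v6 v7
    by (rule brio[OF r0])
  also have "\<dots> = u0^2 - u1^2 - u2^2 - u3^2"
    unfolding r_def Q_def C_def Ox_def Oy_def Omega_eq
    by (simp add: field_simps power2_eq_square)
  finally show ?thesis .
qed



type_synonym cm = "complex \<times> complex \<times> complex \<times> complex"

fun mm :: "cm \<Rightarrow> cm \<Rightarrow> cm" where
  "mm (a,b,c,d) (e,f,g,h) = (a*e+b*g, a*f+b*h, c*e+d*g, c*f+d*h)"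
fun ad :: "cm \<Rightarrow> cm" where
  "ad (a,b,c,d) = (cnj a, cnj c, cnj b, cnj d)"
fun mp :: "cm \<Rightarrow> cm \<Rightarrow> cm" where
  "mp (a,b,c,d) (e,f,g,h) = (a+e, b+f, c+g, d+h)"
fun mdet :: "cm \<Rightarrow> complex" where
  "mdet (a,b,c,d) = a*d - b*c"
fun minv :: "cm \<Rightarrow> cm" where
  "minv (a,b,c,d) = (d, -b, -c, a)"
definition KK :: "cm \<Rightarrow> cm \<Rightarrow> cm" where
  "KK H X = mp (mm H X) (mm (ad X) H)"
fun Hm :: "real \<times> real \<times> real \<times> real \<Rightarrow> cm" where
  "Hm (u0,u1,u2,u3) = (of_real (u0-u1), of_real u2 - \<i> * of_real u3, of_real u2 + \<i> * of_real u3, of_real (u0+u1))"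

abbreviation "Zm \<equiv> ((0::complex),(0::complex),(0::complex),(0::complex))"
abbreviation "Im1 \<equiv> ((1::complex),(0::complex),(0::complex),(1::complex))"

lemma mm_assoc: "mm (mm P Q) R = mm P (mm Q R)"
  by (cases P; cases Q; cases R) (simp add: algebra_simps)
lemma ad_mm: "ad (mm P Q) = mm (ad Q) (ad P)"
  by (cases P; cases Q) (simp add: algebra_simps)
lemma ad_ad[simp]: "ad (ad P) = P"
  by (cases P) simp
lemma mm_mp_l: "mm P (mp Q R) = mp (mm P Q) (mm P R)"
  by (cases P; cases Q; cases R) (simp add: algebra_simps)
lemma mm_mp_r: "mm (mp P Q) R = mp (mm P R) (mm Q R)"
  by (cases P; cases Q; cases R) (simp add: algebra_simps)
lemma mm_Z[simp]: "mm Zm P = Zm" "mm P Zm = Zm"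
  by (cases P; simp)+
lemma mm_I[simp]: "mm Im1 P = P" "mm P Im1 = P"
  by (cases P; simp)+
lemma ad_Z[simp]: "ad Zm = Zm" by simp
lemma mdet_mm: "mdet (mm P Q) = mdet P * mdet Q"
  by (cases P; cases Q) (simp add: algebra_simps)
lemma mdet_ad: "mdet (ad P) = cnj (mdet P)"
  by (cases P) simp
lemma minv_l: "mdet P = 1 \<Longrightarrow> mm (minv P) P = Im1"
  by (cases P) (simp add: algebra_simps)
lemma minv_r: "mdet P = 1 \<Longrightarrow> mm P (minv P) = Im1"
  by (cases P) (simp add: algebra_simps)
lemma Hm_ad: "ad (Hm u) = Hm u"
  by (cases u) simp

lemma Hm_zero: "Hm u = Zm \<longleftrightarrow> u = (0,0,0,0)"
proof (cases u)
  case (fields u0 u1 u2 u3)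
  have "Hm u = Zm \<longleftrightarrow> (u0 - u1 = 0 \<and> u2 = 0 \<and> u3 = 0 \<and> u0 + u1 = 0)"
    by (auto simp: fields complex_eq_iff)
  also have "\<dots> \<longleftrightarrow> u = (0,0,0,0)" by (auto simp: fields)
  finally show ?thesis .
qed

definition wof :: "cm \<Rightarrow> real \<times> real \<times> real \<times> real" where
  "wof H = (case H of (h11,h12,h21,h22) \<Rightarrow> ((Re h22 + Re h11)/2, (Re h22 - Re h11)/2, Re h21, Im h21))"

lemma herm_Hm: assumes "ad H = H" shows "Hm (wof H) = H"
proof (cases H)
  case (fields h11 h12 h21 h22)
  have c: "cnj h11 = h11" "cnj h21 = h12" "cnj h22 = h22" using assms fields by auto
  have i: "Im h11 = 0" "Im h22 = 0" "Re h12 = Re h21" "Im h12 = - Im h21"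
    using c by (simp_all add: complex_eq_iff)
  show ?thesis unfolding fields wof_def
    using i by (simp add: complex_eq_iff field_simps)
qed

lemma mdet_Hm: "mdet (Hm (u0,u1,u2,u3)) = of_real (u0^2 - u1^2 - u2^2 - u3^2)"
  by (simp add: complex_eq_iff power2_eq_square algebra_simps)

lemma KK_trans:
  assumes AX: "mm A X = mm Y A"
  shows "KK (mm (mm (ad A) H) A) X = mm (mm (ad A) (KK H Y)) A"
proof -
  have e1: "mm (mm (mm (ad A) H) A) X = mm (ad A) (mm H (mm Y A))"
    by (simp add: mm_assoc AX)
  have e2: "mm (ad X) (mm (mm (ad A) H) A) = mm (ad A) (mm (ad Y) (mm H A))"
  proof -
    have "mm (ad X) (mm (mm (ad A) H) A) = mm (mm (ad X) (ad A)) (mm H A)"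
      by (simp add: mm_assoc)
    also have "\<dots> = mm (ad (mm A X)) (mm H A)" by (simp add: ad_mm)
    also have "\<dots> = mm (mm (ad A) (ad Y)) (mm H A)" by (simp add: AX ad_mm)
    finally show ?thesis by (simp add: mm_assoc)
  qed
  show ?thesis unfolding KK_def e1 e2
    by (simp add: mm_mp_l mm_mp_r mm_assoc)
qed

definition Xm :: "complex \<Rightarrow> complex \<Rightarrow> complex \<Rightarrow> cm" where
  "Xm m0 m1 m2 = (m1/2, m0, -m2/2, -m1/2)"

lemma KK_expl: "KK (Hm (u0,u1,u2,u3)) (Xm m0 m1 m2) =
   (of_real (kk3 m0 m1 m2 u0 u1 u2 u3), (of_real (kk1 m0 m1 m2 u0 u1 u2 u3) - \<i> * of_real (kk2 m0 m1 m2 u0 u1 u2 u3))/2,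
    (of_real (kk1 m0 m1 m2 u0 u1 u2 u3) + \<i> * of_real (kk2 m0 m1 m2 u0 u1 u2 u3))/2, of_real (kk0 m0 m1 m2 u0 u1 u2 u3))"
  unfolding KK_def Xm_def kk0_def kk1_def kk2_def kk3_def
  by (simp add: complex_eq_iff field_simps)

lemma KK_iff: "KK (Hm (u0,u1,u2,u3)) (Xm m0 m1 m2) = Zm \<longleftrightarrow>
   (kk0 m0 m1 m2 u0 u1 u2 u3 = 0 \<and> kk1 m0 m1 m2 u0 u1 u2 u3 = 0 \<and> kk2 m0 m1 m2 u0 u1 u2 u3 = 0 \<and> kk3 m0 m1 m2 u0 u1 u2 u3 = 0)"
  unfolding KK_expl by (auto simp: complex_eq_iff)


lemma AX:
  "mm ((d*m2 - c*m1)/2, d*m1/2 - c*m0, c, d) (Xm m0 m1 m2) = mm (0, (2*m0*m2 - m1^2)/4, -1, 0) ((d*m2 - c*m1)/2, d*m1/2 - c*m0, c, d)"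
  unfolding Xm_def by (simp add: field_simps power2_eq_square)

lemma canon_expl: "KK (Hm (w0,w1,w2,w3)) (0, of_real q/4, -1, 0) =
   (of_real (-2*w2), of_real (q*(w0-w1)/4 - (w0+w1)), of_real (q*(w0-w1)/4 - (w0+w1)), of_real (q*w2/2))"
  unfolding KK_def by (simp add: complex_eq_iff field_simps)

lemma canon: "KK (Hm (w0,w1,w2,w3)) (0, of_real q/4, -1, 0) = Zm \<longleftrightarrow> (w2 = 0 \<and> w0 + w1 = q/4 * (w0 - w1))"
  unfolding canon_expl prod.inject of_real_eq_0_iff by (auto simp: field_simps)



definition SS :: "complex \<Rightarrow> complex \<Rightarrow> complex \<Rightarrow> complex \<Rightarrow> real \<times> real \<times> real \<times> real \<Rightarrow> nat \<Rightarrow> complex" where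
  "SS a b c d w k = (\<Sum>r<4. Omat a b c d r k * complex_of_real (tup w r))"

lemma lt4: "(\<forall>k<4. P (k::nat)) \<longleftrightarrow> P 0 \<and> P 1 \<and> P 2 \<and> P 3"
  by (auto simp: numeral_eq_Suc less_Suc_eq)

lemma sum4: "(\<Sum>r<4. f (r::nat)) = f 0 + f 1 + f 2 + (f 3 :: complex)"
  by (simp add: numeral_eq_Suc)

lemma eqOT_S: "eq_OT a b c d (u0,u1,u2,u3) w \<longleftrightarrow>
   (of_real u0 = SS a b c d w 0 \<and> of_real u1 = SS a b c d w 1 \<and> of_real u2 = SS a b c d w 2 \<and> of_real u3 = SS a b c d w 3)"
  unfolding eq_OT_def lt4 SS_def by (simp add: tup_def)

lemma P_S: "mm (mm (ad (a,b,c,d)) (Hm (w0,w1,w2,w3))) (a,b,c,d) =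
  (SS a b c d (w0,w1,w2,w3) 0 - SS a b c d (w0,w1,w2,w3) 1,
   SS a b c d (w0,w1,w2,w3) 2 - \<i> * SS a b c d (w0,w1,w2,w3) 3,
   SS a b c d (w0,w1,w2,w3) 2 + \<i> * SS a b c d (w0,w1,w2,w3) 3,
   SS a b c d (w0,w1,w2,w3) 0 + SS a b c d (w0,w1,w2,w3) 1)"
  unfolding SS_def sum4 Omat_def tup_def
  by (simp add: algebra_simps)



lemma lin4:
  fixes S0 S1 S2 S3 :: complex and u0 u1 u2 u3 :: real
  shows "(complex_of_real (u0-u1) = S0 - S1 \<and> complex_of_real u2 - \<i> * complex_of_real u3 = S2 - \<i> * S3 \<and>
          complex_of_real u2 + \<i> * complex_of_real u3 = S2 + \<i> * S3 \<and> complex_of_real (u0+u1) = S0 + S1) \<longleftrightarrow>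
         (complex_of_real u0 = S0 \<and> complex_of_real u1 = S1 \<and> complex_of_real u2 = S2 \<and> complex_of_real u3 = S3)"
proof
  assume H: "complex_of_real (u0-u1) = S0 - S1 \<and> complex_of_real u2 - \<i> * complex_of_real u3 = S2 - \<i> * S3 \<and>
          complex_of_real u2 + \<i> * complex_of_real u3 = S2 + \<i> * S3 \<and> complex_of_real (u0+u1) = S0 + S1"
  then have e1: "complex_of_real u0 - complex_of_real u1 = S0 - S1" and e4: "complex_of_real u0 + complex_of_real u1 = S0 + S1"
    and e2: "complex_of_real u2 - \<i> * complex_of_real u3 = S2 - \<i> * S3" and e3: "complex_of_real u2 + \<i> * complex_of_real u3 = S2 + \<i> * S3"
    by auto
  have a: "complex_of_real u0 = S0" using e1 e4 by algebra
  have b: "complex_of_real u1 = S1" using e1 e4 by algebra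
  have c: "complex_of_real u2 = S2" using e2 e3 by algebra
  have "\<i> * complex_of_real u3 = \<i> * S3" using e2 e3 by algebra
  then have d: "complex_of_real u3 = S3" by simp
  show "complex_of_real u0 = S0 \<and> complex_of_real u1 = S1 \<and> complex_of_real u2 = S2 \<and> complex_of_real u3 = S3"
    using a b c d by auto
qed auto

lemma eqOT_iff: "eq_OT a b c d u w \<longleftrightarrow> Hm u = mm (mm (ad (a,b,c,d)) (Hm w)) (a,b,c,d)"
proof -
  obtain u0 u1 u2 u3 where u: "u = (u0,u1,u2,u3)" by (cases u)
  obtain w0 w1 w2 w3 where w: "w = (w0,w1,w2,w3)" by (cases w)
  show ?thesis unfolding u w eqOT_S P_S unfolding Hm.simps prod.inject lin4 ..
qed

lemma inv_sand: "mdet A = 1 \<Longrightarrow> mm (mm (ad (minv A)) (mm (mm (ad A) K) A)) (minv A) = K"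
proof -
  assume "mdet A = 1"
  then have "mm (ad (minv A)) (mm (ad A) R) = R" for R
  proof -
    have "mm (ad (minv A)) (mm (ad A) R) = mm (ad (mm A (minv A))) R" by (simp add: mm_assoc ad_mm)
    also have "\<dots> = R" using \<open>mdet A = 1\<close> by (simp add: minv_r)
    finally show ?thesis .
  qed
  moreover have "mm (mm K A) (minv A) = K" using \<open>mdet A = 1\<close> by (simp add: mm_assoc minv_r)
  ultimately show ?thesis by (simp add: mm_assoc)
qed

lemma inv_sand2: "mdet A = 1 \<Longrightarrow> mm (mm (ad A) (mm (mm (ad (minv A)) K) (minv A))) A = K"
proof -
  assume "mdet A = 1"
  then have "mm (ad A) (mm (ad (minv A)) R) = R" for R
  proof -
    have "mm (ad A) (mm (ad (minv A)) R) = mm (ad (mm (minv A) A)) R" by (simp add: mm_assoc ad_mm)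
    also have "\<dots> = R" using \<open>mdet A = 1\<close> by (simp add: minv_l)
    finally show ?thesis .
  qed
  moreover have "mm (mm K (minv A)) A = K" using \<open>mdet A = 1\<close> by (simp add: mm_assoc minv_l)
  ultimately show ?thesis by (simp add: mm_assoc)
qed



lemma algI:
  fixes p0 q0 p1 q1 p2 q2 A C u2 u3 :: real
  assumes "2*p0*u2 - 2*q0*u3 - p1*A = 0" "-2*q1*u3 - p2*A + 2*p0*C = 0"
   "2*q1*u2 - q2*A - 2*q0*C = 0" "p1*C - p2*u2 - q2*u3 = 0"
  shows "(p0*q2+q0*p2-p1*q1)^2 * A = 0" "(p0*q2+q0*p2-p1*q1)^2 * C = 0"
    "(p0*q2+q0*p2-p1*q1)^2 * u2 = 0" "(p0*q2+q0*p2-p1*q1)^2 * u3 = 0"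
  using assms by algebra+

lemma killing_set_iff: "u \<in> killing_set m0 m1 m2 \<longleftrightarrow> u \<noteq> (0,0,0,0) \<and> KK (Hm u) (Xm m0 m1 m2) = Zm"
proof -
  obtain u0 u1 u2 u3 where u: "u = (u0,u1,u2,u3)" by (cases u)
  show ?thesis unfolding killing_set_def u KK_iff using killing_iff_kk by auto
qed

lemma partI:
  assumes "2 * m0 * m2 - m1^2 \<notin> \<real>"
  shows "killing_set m0 m1 m2 = {}"
proof (rule ccontr)
  assume "killing_set m0 m1 m2 \<noteq> {}"
  then obtain u where uK: "u \<in> killing_set m0 m1 m2" by auto
  obtain u0 u1 u2 u3 where u: "u = (u0,u1,u2,u3)" by (cases u)
  have K: "u \<noteq> (0,0,0,0) \<and> KK (Hm u) (Xm m0 m1 m2) = Zm" using killing_set_iff[THEN iffD1, OF uK] .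
  then have nz: "u \<noteq> (0,0,0,0)" by (rule conjunct1)
  have kk: "kk0 m0 m1 m2 u0 u1 u2 u3 = 0 \<and> kk1 m0 m1 m2 u0 u1 u2 u3 = 0 \<and> kk2 m0 m1 m2 u0 u1 u2 u3 = 0 \<and> kk3 m0 m1 m2 u0 u1 u2 u3 = 0"
    using conjunct2[OF K] unfolding u KK_iff .
  have "Im (2 * m0 * m2 - m1^2) \<noteq> 0" using assms complex_is_Real_iff by blast
  moreover have "Im (2 * m0 * m2 - m1^2) = 2*(Re m0 * Im m2 + Im m0 * Re m2 - Re m1 * Im m1)"
    by (simp add: power2_eq_square algebra_simps)
  ultimately have iq: "Re m0 * Im m2 + Im m0 * Re m2 - Re m1 * Im m1 \<noteq> 0"
    by simp
  note e = algI[of "Re m0" u2 "Im m0" u3 "Re m1" "u0+u1" "Im m1" "Re m2" "u0-u1" "Im m2"]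
  have E: "2*Re m0*u2 - 2*Im m0*u3 - Re m1*(u0+u1) = 0" "-2*Im m1*u3 - Re m2*(u0+u1) + 2*Re m0*(u0-u1) = 0"
   "2*Im m1*u2 - Im m2*(u0+u1) - 2*Im m0*(u0-u1) = 0" "Re m1*(u0-u1) - Re m2*u2 - Im m2*u3 = 0"
    using kk unfolding kk0_def kk1_def kk2_def kk3_def by (simp_all add: algebra_simps)
  have "u0+u1 = 0" "u0-u1 = 0" "u2 = 0" "u3 = 0" using e[OF E] iq by (simp_all add: mult_eq_0_iff)
  then have "u = (0,0,0,0)" using u by auto
  then show False using nz by blast
qed



lemma partII:
  fixes m0 m1 m2 c d :: complex and q :: real
  assumes qr: "2 * m0 * m2 - m1^2 = complex_of_real q"
    and cons: "d^2 * m2 / 2 - c * d * m1 + c^2 * m0 = 1"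
  defines "a \<equiv> (d * m2 - c * m1) / 2" and "b \<equiv> d * m1 / 2 - c * m0"
  shows "(\<forall>u. u \<in> killing_set m0 m1 m2 \<longleftrightarrow>
            (\<exists>s1 s2. (s1, s2) \<noteq> (0, 0) \<and> eq_OT a b c d u (s1 * (q / 4 + 1), s1 * (q / 4 - 1), 0, s2)))
       \<and> (\<forall>u s1 s2. (s1, s2) \<noteq> (0, 0) \<and> eq_OT a b c d u (s1 * (q / 4 + 1), s1 * (q / 4 - 1), 0, s2) \<longrightarrow>
            (\<forall>p\<in>dom_u u. gauss_curvature (gmet u) p = s1^2 * q - s2^2))"
proof -
  define A where "A = (a,b,c,d)"
  define Y where "Y = ((0::complex), complex_of_real q/4, (-1::complex), (0::complex))"
  have "mdet A = d^2*m2/2 - c*d*m1 + c^2*m0"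
    unfolding A_def a_def b_def by (simp add: power2_eq_square field_simps; simp add: algebra_simps)
  then have detA: "mdet A = 1" using cons by simp
  have AXY: "mm A (Xm m0 m1 m2) = mm Y A"
    using AX[of d m2 c m1 m0] unfolding A_def Y_def a_def b_def qr by simp
  have eq: "eq_OT a b c d u w \<longleftrightarrow> Hm u = mm (mm (ad A) (Hm w)) A" for u w
    unfolding A_def by (rule eqOT_iff)
  have tr: "KK (mm (mm (ad A) H) A) (Xm m0 m1 m2) = mm (mm (ad A) (KK H Y)) A" for H
    by (rule KK_trans[OF AXY])
  have bk: "K = Zm" if "mm (mm (ad A) K) A = Zm" for K
    using inv_sand[OF detA, of K] that by simp
  let ?w = "\<lambda>(s1::real) (s2::real). (s1 * (q / 4 + 1), s1 * (q / 4 - 1), (0::real), s2)"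
  have wK: "KK (Hm (?w s1 s2)) Y = Zm" for s1 s2
    unfolding Y_def canon by (simp add: field_simps)
  have part1: "u \<in> killing_set m0 m1 m2 \<longleftrightarrow> (\<exists>s1 s2. (s1, s2) \<noteq> (0, 0) \<and> eq_OT a b c d u (?w s1 s2))" for u
  proof
    assume uK: "u \<in> killing_set m0 m1 m2"
    have K: "u \<noteq> (0,0,0,0) \<and> KK (Hm u) (Xm m0 m1 m2) = Zm" using killing_set_iff[THEN iffD1, OF uK] .
    define H' where "H' = mm (mm (ad (minv A)) (Hm u)) (minv A)"
    have hH: "ad H' = H'" unfolding H'_def by (simp add: ad_mm Hm_ad mm_assoc)
    define w' where "w' = wof H'"
    have Hw: "Hm w' = H'" unfolding w'_def by (rule herm_Hm[OF hH])
    have Hu: "Hm u = mm (mm (ad A) (Hm w')) A" unfolding Hw H'_def by (rule inv_sand2[OF detA, symmetric])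
    have "KK (Hm u) (Xm m0 m1 m2) = mm (mm (ad A) (KK (Hm w') Y)) A" unfolding Hu by (rule tr)
    then have "mm (mm (ad A) (KK (Hm w') Y)) A = Zm" using K by simp
    then have KY: "KK (Hm w') Y = Zm" by (rule bk)
    obtain w0 w1 w2 w3 where w': "w' = (w0,w1,w2,w3)" by (cases w')
    have c1: "w2 = 0" "w0 + w1 = q/4 * (w0 - w1)" using KY unfolding w' Y_def canon by auto
    define s1 where "s1 = (w0 - w1)/2"
    define s2 where "s2 = w3"
    have ww: "w' = ?w s1 s2" unfolding w' s1_def s2_def using c1 by (simp add: field_simps)
    have "(s1, s2) \<noteq> (0,0)"
    proof
      assume "(s1, s2) = (0,0)"
      then have "w' = (0,0,0,0)" unfolding ww by simp
      then have "Hm u = Zm" unfolding Hu by simp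
      then show False using K by (simp add: Hm_zero)
    qed
    moreover have "eq_OT a b c d u (?w s1 s2)" unfolding eq ww[symmetric] by (rule Hu)
    ultimately show "\<exists>s1 s2. (s1, s2) \<noteq> (0, 0) \<and> eq_OT a b c d u (?w s1 s2)" by blast
  next
    assume "\<exists>s1 s2. (s1, s2) \<noteq> (0, 0) \<and> eq_OT a b c d u (?w s1 s2)"
    then obtain s1 s2 where s: "(s1, s2) \<noteq> (0, 0)" and e: "eq_OT a b c d u (?w s1 s2)" by blast
    have Hu: "Hm u = mm (mm (ad A) (Hm (?w s1 s2))) A" using eq[of u "?w s1 s2", THEN iffD1, OF e] .
    have KX: "KK (Hm u) (Xm m0 m1 m2) = Zm" unfolding Hu tr wK by simp
    have "u \<noteq> (0,0,0,0)"
    proof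
      assume "u = (0,0,0,0)"
      then have "Hm u = Zm" by (simp add: Hm_zero)
      then have "mm (mm (ad A) (Hm (?w s1 s2))) A = Zm" using Hu by simp
      then have "Hm (?w s1 s2) = Zm" by (rule bk)
      then have "s1 * (q / 4 + 1) = 0 \<and> s1 * (q / 4 - 1) = 0 \<and> s2 = 0" by (simp only: Hm_zero prod.inject)
      then have "s1 * (q / 4 + 1) - s1 * (q / 4 - 1) = 0" "s2 = 0" by auto
      then have "s1 = 0" "s2 = 0" by (simp_all add: algebra_simps)
      then show False using s by simp
    qed
    then show "u \<in> killing_set m0 m1 m2" unfolding killing_set_iff using KX by simp
  qed
  have part2: "gauss_curvature (gmet u) p = s1^2 * q - s2^2"
    if e: "eq_OT a b c d u (?w s1 s2)" and p: "p \<in> dom_u u" for u s1 s2 p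
  proof -
    obtain u0 u1 u2 u3 where u: "u = (u0,u1,u2,u3)" by (cases u)
    obtain x y where pxy: "p = (x,y)" by (cases p)
    have Om: "Omega (u0,u1,u2,u3) (x,y) \<noteq> 0" using p unfolding dom_u_def u pxy by simp
    have Hu: "Hm u = mm (mm (ad A) (Hm (?w s1 s2))) A" using eq[of u "?w s1 s2", THEN iffD1, OF e] .
    have "complex_of_real (u0^2 - u1^2 - u2^2 - u3^2) = mdet (Hm u)" unfolding u mdet_Hm ..
    also have "\<dots> = cnj (mdet A) * mdet (Hm (?w s1 s2)) * mdet A" unfolding Hu mdet_mm mdet_ad ..
    also have "\<dots> = mdet (Hm (?w s1 s2))" using detA by simp
    also have "\<dots> = complex_of_real (s1^2 * q - s2^2)" unfolding mdet_Hm
      by (simp add: power2_eq_square algebra_simps)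
    finally have "u0^2 - u1^2 - u2^2 - u3^2 = s1^2 * q - s2^2" using of_real_eq_iff by blast
    then show ?thesis unfolding u pxy using gauss_val[OF Om] by simp
  qed
  show ?thesis using part1 part2 by blast
qed

theorem theorem9p1:
  fixes m0 m1 m2 :: complex
  assumes nonzero: "(m0, m1, m2) \<noteq> (0, 0, 0)"
  shows "(2 * m0 * m2 - m1^2 \<notin> \<real> \<longrightarrow> killing_set m0 m1 m2 = {})
       \<and> (2 * m0 * m2 - m1^2 \<in> \<real> \<longrightarrow>
           (\<forall>c d :: complex. d^2 * m2 / 2 - c * d * m1 + c^2 * m0 = 1 \<longrightarrow>
             (let a = (d * m2 - c * m1) / 2;
                  b = d * m1 / 2 - c * m0;
                  q = Re (2 * m0 * m2 - m1^2);
                  w = (\<lambda>s1 s2 :: real. (s1 * (q / 4 + 1), s1 * (q / 4 - 1), 0, s2))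
              in (\<forall>u. u \<in> killing_set m0 m1 m2 \<longleftrightarrow>
                        (\<exists>s1 s2. (s1, s2) \<noteq> (0, 0) \<and> eq_OT a b c d u (w s1 s2)))
               \<and> (\<forall>u s1 s2. (s1, s2) \<noteq> (0, 0) \<and> eq_OT a b c d u (w s1 s2) \<longrightarrow>
                        (\<forall>p\<in>dom_u u. gauss_curvature (gmet u) p = s1^2 * q - s2^2)))))"
proof (intro conjI impI allI)
  show "killing_set m0 m1 m2 = {}" if "2 * m0 * m2 - m1^2 \<notin> \<real>" using partI[OF that] .
next
  fix c d :: complex
  assume r: "2 * m0 * m2 - m1^2 \<in> \<real>" and cons: "d^2 * m2 / 2 - c * d * m1 + c^2 * m0 = 1"
  have qr: "2 * m0 * m2 - m1^2 = complex_of_real (Re (2 * m0 * m2 - m1^2))"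
    using r by (simp add: complex_is_Real_iff complex_eq_iff)
  show "let a = (d * m2 - c * m1) / 2;
                  b = d * m1 / 2 - c * m0;
                  q = Re (2 * m0 * m2 - m1^2);
                  w = (\<lambda>s1 s2 :: real. (s1 * (q / 4 + 1), s1 * (q / 4 - 1), 0, s2))
              in (\<forall>u. u \<in> killing_set m0 m1 m2 \<longleftrightarrow>
                        (\<exists>s1 s2. (s1, s2) \<noteq> (0, 0) \<and> eq_OT a b c d u (w s1 s2)))
               \<and> (\<forall>u s1 s2. (s1, s2) \<noteq> (0, 0) \<and> eq_OT a b c d u (w s1 s2) \<longrightarrow>
                        (\<forall>p\<in>dom_u u. gauss_curvature (gmet u) p = s1^2 * q - s2^2))"
    unfolding Let_def by (rule partII[OF qr cons])
qed


end
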